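(* Let $d\geq 2$ and $N\geq1$ be integers and let $A\in\mathbb{Z}_{\geq0}^{N\times d}$ be an $(N,d)$-complete consecutive integers matrix. Then $$a_d(\lfloor\log_d N\rfloor)\leq\beta(A)\leq\gamma(A)\leq a_d(\lceil\log_d N\rceil),$$ where $a_d(k)=d+\sum_{i=0}^{d-1}\sum_{j=1}^{k} i\cdot d^{j-1}$. In particular, underestimating $\beta(A)$ by $a_d(\lfloor\log_d N\rfloor)$ and overestimating $\gamma(A)$ by $a_d(\lceil\log_d N\rceil)$ incurs an additive error of at most $\sum_{i=0}^{d-1} i\cdot d^{\lceil\log_d N\rceil-1}$.
   Context: For $A\in\mathbb{R}^{m\times d}$ and $\Pi=(\pi_1,\dots,\pi_d)\in\mathfrak{S}(m)^d$ (where $\mathfrak{S}(m)$ is the symmetric group on $\{1,\dots,m\}$), $A^\Pi$ denotes the matrix with $A^\Pi_{i,j}=A_{\pi_j^{-1}(i),j}$. Define $\gamma(A)=\min_{\Pi}\max_{i}\sum_{j=1}^d A^\Pi_{i,j}$ and $\beta(A)=\max_{\Pi}\min_{i}\sum_{j=1}^d A^\Pi_{i,j}$. For $d,N\in\mathbb{Z}_{\geq0}$ let $a=(1,\dots,N)^\top$; any matrix $A^\Pi$ obtained from $(a,\dots,a)\in\mathbb{Z}^{N\times d}$ by permutations $\Pi\in\mathfrak{S}(N)^d$ of the columns' entries is called an $(N,d)$-complete consecutive integers matrix. *)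

theory Defs
  imports "HOL-Combinatorics.Permutations" "HOL-Library.FuncSet" Complex_Main
begin

text \<open>Matrices in Z^(N x d) are functions nat => nat => int, row index i < N,
  column index j < d (0-based).\<close>

definition perm_tuples :: "nat \<Rightarrow> nat \<Rightarrow> (nat \<Rightarrow> nat \<Rightarrow> nat) set" where
  "perm_tuples N d = PiE {..<d} (\<lambda>_. {p. p permutes {..<N}})"

definition perm_matrix :: "(nat \<Rightarrow> nat \<Rightarrow> int) \<Rightarrow> (nat \<Rightarrow> nat \<Rightarrow> nat) \<Rightarrow> nat \<Rightarrow> nat \<Rightarrow> int" where
  "perm_matrix A P = (\<lambda>i j. A (inv (P j) i) j)"

definition row_sum :: "nat \<Rightarrow> (nat \<Rightarrow> nat \<Rightarrow> int) \<Rightarrow> nat \<Rightarrow> int" where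
  "row_sum d A i = (\<Sum>j<d. A i j)"

definition gamma :: "nat \<Rightarrow> nat \<Rightarrow> (nat \<Rightarrow> nat \<Rightarrow> int) \<Rightarrow> int" where
  "gamma N d A = Min ((\<lambda>P. Max ((\<lambda>i. row_sum d (perm_matrix A P) i) ` {..<N})) ` perm_tuples N d)"

definition beta :: "nat \<Rightarrow> nat \<Rightarrow> (nat \<Rightarrow> nat \<Rightarrow> int) \<Rightarrow> int" where
  "beta N d A = Max ((\<lambda>P. Min ((\<lambda>i. row_sum d (perm_matrix A P) i) ` {..<N})) ` perm_tuples N d)"

text \<open>(N,d)-complete consecutive integers matrix: A = (a,...,a)^Pi with a = (1,...,N)^T,
  i.e. the 0-based row r of a holds r+1.\<close>
definition complete_consec :: "nat \<Rightarrow> nat \<Rightarrow> (nat \<Rightarrow> nat \<Rightarrow> int) \<Rightarrow> bool" where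
  "complete_consec N d A \<longleftrightarrow>
     (\<exists>P\<in>perm_tuples N d. \<forall>i<N. \<forall>j<d. A i j = perm_matrix (\<lambda>r _. int r + 1) P i j)"

definition a_d :: "nat \<Rightarrow> nat \<Rightarrow> int" where
  "a_d d k = int d + (\<Sum>i<d. \<Sum>j=1..k. int i * int d ^ (j - 1))"

end

theory Submission
  imports Defs
begin

definition g3 :: "nat \<Rightarrow> nat \<Rightarrow> nat" where
 "g3 N r = (if odd N then (if r \<le> N div 2 then N div 2 + r else r - N div 2 - 1)
            else (if r < N div 2 then N div 2 + r else r - N div 2))"
definition h3 :: "nat \<Rightarrow> nat \<Rightarrow> nat" where
 "h3 N r = (if odd N then (if r \<le> N div 2 then 2*(N div 2) - 2*r else 4*(N div 2)+1-2*r)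
            else (if r < N div 2 then 2*(N div 2) - 1 - 2*r else 4*(N div 2) - 2 - 2*r))"

lemma g3_range: "r < N \<Longrightarrow> g3 N r < N"
  unfolding g3_def by (cases "odd N") (auto elim!: oddE evenE)
lemma h3_range: "r < N \<Longrightarrow> h3 N r < N"
  unfolding h3_def by (cases "odd N") (auto elim!: oddE evenE)
lemma g3_inj: "inj_on (g3 N) {..<N}"
  unfolding g3_def inj_on_def by (cases "odd N") (auto elim!: oddE evenE split: if_splits)
lemma h3_inj: "inj_on (h3 N) {..<N}"
  unfolding h3_def inj_on_def by (cases "odd N"; auto elim!: oddE evenE split: if_splits; presburger)
lemma gh3_sum: "r < N \<Longrightarrow> int (3*(N-1)) \<le> 2 * int (r + g3 N r + h3 N r) + 1
   \<and> 2 * int (r + g3 N r + h3 N r) \<le> int (3*(N-1)) + 1"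
  unfolding g3_def h3_def by (cases "odd N") (auto elim!: oddE evenE)

definition colf :: "nat \<Rightarrow> nat \<Rightarrow> nat \<Rightarrow> nat \<Rightarrow> nat" where
 "colf d N j r = (if odd d \<and> j = d-2 then g3 N r else if odd d \<and> j = d-1 then h3 N r
                  else if even j then r else N-1-r)"

lemma colf_range: "r < N \<Longrightarrow> colf d N j r < N"
  unfolding colf_def using g3_range h3_range by auto

lemma colf_inj: "inj_on (colf d N j) {..<N}"
proof -
  have r: "inj_on (\<lambda>r. N - 1 - r) {..<N}" by (auto simp: inj_on_def)
  have i: "inj_on (\<lambda>r::nat. r) {..<N}" by simp
  have "colf d N j = (if odd d \<and> j = d-2 then g3 N else if odd d \<and> j = d-1 then h3 N
                  else if even j then (\<lambda>r. r) else (\<lambda>r. N-1-r))"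
    unfolding colf_def by (auto simp: fun_eq_iff)
  then show ?thesis using g3_inj h3_inj r i by presburger
qed

lemma pair_sum: "(\<Sum>j<2*m. (if even j then a else b)) = m * (a + b :: nat)"
  by (induction m) (auto simp: algebra_simps)

lemma colf_sum:
  assumes "d \<ge> 2" "r < N"
  shows "int d * (int N - 1) \<le> 2 * int (\<Sum>j<d. colf d N j r) + 1
       \<and> 2 * int (\<Sum>j<d. colf d N j r) \<le> int d * (int N - 1) + 1"
proof (cases "even d")
  case True
  then obtain m where m: "d = 2*m" by auto
  have "(\<Sum>j<d. colf d N j r) = (\<Sum>j<2*m. (if even j then r else N-1-r))"
    using True m by (intro sum.cong) (auto simp: colf_def)
  also have "\<dots> = m * (N - 1)" using pair_sum assms by simp
  finally show ?thesis using m assms by (simp add: of_nat_diff)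
next
  case False
  define m where "m = (d - 3) div 2"
  have m: "d = 2*m + 3" using False assms unfolding m_def by presburger
  have s: "{..<d} = {..<2*m} \<union> {2*m, 2*m+1, 2*m+2}" using m by auto
  have "(\<Sum>j<d. colf d N j r) = (\<Sum>j<2*m. colf d N j r) + (r + g3 N r + h3 N r)"
    unfolding s using m by (subst sum.union_disjoint) (auto simp: colf_def)
  also have "(\<Sum>j<2*m. colf d N j r) = (\<Sum>j<2*m. (if even j then r else N-1-r))"
    using m by (intro sum.cong) (auto simp: colf_def)
  also have "\<dots> = m * (N - 1)" using pair_sum assms by simp
  finally have e: "(\<Sum>j<d. colf d N j r) = m * (N - 1) + (r + g3 N r + h3 N r)" .
  have N1: "N \<ge> 1" using assms by simp
  have e2: "int (\<Sum>j<d. colf d N j r) = int m * (int N - 1) + int (r + g3 N r + h3 N r)"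
    unfolding e using N1 by (simp add: of_nat_diff)
  have e3: "int d * (int N - 1) = 2 * (int m * (int N - 1)) + int (3 * (N - 1))"
    using m N1 by (simp add: of_nat_diff algebra_simps)
  show ?thesis using gh3_sum[OF assms(2)] unfolding e2 e3 by (smt (verit))
qed

lemma sum_inv_perm:
  assumes "p permutes {..<N}"
  shows "(\<Sum>i<N. g (inv p i)) = (\<Sum>i<N. g i)"
  using sum.reindex_bij_betw[OF permutes_imp_bij[OF permutes_inv[OF assms]]] by simp

lemma a_d_formula: "2 * a_d d k = int d * (int d ^ k + 1)"
proof -
  have s1: "2 * (\<Sum>i<d. int i) = int d * (int d - 1)"
    by (induction d) (auto simp: algebra_simps)
  have s2: "(int d - 1) * (\<Sum>j=1..k. int d ^ (j - 1)) = int d ^ k - 1"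
    by (induction k) (auto simp: algebra_simps)
  have "2 * a_d d k = 2 * int d + (2 * (\<Sum>i<d. int i)) * (\<Sum>j=1..k. int d ^ (j - 1))"
  proof -
    have dd: "(\<Sum>i<d. \<Sum>j=1..k. int i * int d^(j-1)) = (\<Sum>i<d. int i) * (\<Sum>j=1..k. int d^(j-1))"
      by (simp add: sum_product)
    show ?thesis unfolding a_d_def dd by (simp add: algebra_simps)
  qed
  also have "\<dots> = 2 * int d + int d * ((int d - 1) * (\<Sum>j=1..k. int d ^ (j - 1)))"
    unfolding s1 by (simp add: algebra_simps)
  finally show ?thesis unfolding s2 by (simp add: algebra_simps)
qed


lemma perm_tuples_finite: "finite (perm_tuples N d)"
  unfolding perm_tuples_def by (intro finite_PiE finite_permutations) auto

lemma total_sum: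
  assumes "complete_consec N d A" "P \<in> perm_tuples N d"
  shows "2 * (\<Sum>i<N. row_sum d (perm_matrix A P) i) = int d * (int N * (int N + 1))"
proof -
  obtain Q where Q: "Q \<in> perm_tuples N d"
    and hQ: "\<forall>i<N. \<forall>j<d. A i j = perm_matrix (\<lambda>r _. int r + 1) Q i j"
    using assms(1) unfolding complete_consec_def by blast
  have Pp: "P j permutes {..<N}" if "j < d" for j
    using assms(2) that unfolding perm_tuples_def by auto
  have Qp: "Q j permutes {..<N}" if "j < d" for j
    using Q that unfolding perm_tuples_def by auto
  have col: "(\<Sum>i<N. A i j) = (\<Sum>i<N. int i + 1)" if "j < d" for j
  proof -
    have "(\<Sum>i<N. A i j) = (\<Sum>i<N. int (inv (Q j) i) + 1)"
      using hQ that by (intro sum.cong) (auto simp: perm_matrix_def)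
    also have "\<dots> = (\<Sum>i<N. int i + 1)" by (rule sum_inv_perm[OF Qp[OF that]])
    finally show ?thesis .
  qed
  have "(\<Sum>i<N. row_sum d (perm_matrix A P) i) = (\<Sum>j<d. \<Sum>i<N. A (inv (P j) i) j)"
    unfolding row_sum_def perm_matrix_def by (rule sum.swap)
  also have "\<dots> = (\<Sum>j<d. \<Sum>i<N. A i j)"
    by (intro sum.cong refl sum_inv_perm Pp) auto
  also have "\<dots> = (\<Sum>j<d. \<Sum>i<N. int i + 1)" by (rule sum.cong[OF refl]) (simp add: col)
  also have "\<dots> = int d * (\<Sum>i<N. int i + 1)" by simp
  finally have e: "(\<Sum>i<N. row_sum d (perm_matrix A P) i) = int d * (\<Sum>i<N. int i + 1)" .
  have g: "2 * (\<Sum>i<N. int i + 1) = int N * (int N + 1)"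
    by (induction N) (auto simp: algebra_simps)
  show ?thesis unfolding e using g by (simp add: algebra_simps)
qed

lemma min_max_avg:
  assumes "complete_consec N d A" "P \<in> perm_tuples N d" "N \<ge> 1"
  shows "2 * Min ((\<lambda>i. row_sum d (perm_matrix A P) i) ` {..<N}) \<le> int d * (int N + 1)"
    and "int d * (int N + 1) \<le> 2 * Max ((\<lambda>i. row_sum d (perm_matrix A P) i) ` {..<N})"
proof -
  let ?R = "\<lambda>i. row_sum d (perm_matrix A P) i"
  let ?m = "Min (?R ` {..<N})" and ?M = "Max (?R ` {..<N})"
  have ne: "?R ` {..<N} \<noteq> {}" using assms(3) by (auto simp: lessThan_empty_iff)
  have "(\<Sum>i<N. ?m) \<le> (\<Sum>i<N. ?R i)" by (intro sum_mono) auto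
  then have "int N * (2 * ?m) \<le> int N * (int d * (int N + 1))"
    using total_sum[OF assms(1,2)] by (simp add: algebra_simps)
  then show "2 * ?m \<le> int d * (int N + 1)" using assms(3)
    by (simp add: mult_le_cancel_left_pos)
  have "(\<Sum>i<N. ?R i) \<le> (\<Sum>i<N. ?M)" by (intro sum_mono) auto
  then have "int N * (int d * (int N + 1)) \<le> int N * (2 * ?M)"
    using total_sum[OF assms(1,2)] by (simp add: algebra_simps)
  then show "int d * (int N + 1) \<le> 2 * ?M" using assms(3)
    by (simp add: mult_le_cancel_left_pos)
qed


lemma construction:
  assumes "complete_consec N d A" "d \<ge> 2"
  shows "\<exists>P\<in>perm_tuples N d. \<forall>i<N.
     int d * (int N + 1) \<le> 2 * row_sum d (perm_matrix A P) i + 1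
   \<and> 2 * row_sum d (perm_matrix A P) i \<le> int d * (int N + 1) + 1"
proof -
  obtain Q where Q: "Q \<in> perm_tuples N d"
    and hQ: "\<forall>i<N. \<forall>j<d. A i j = perm_matrix (\<lambda>r _. int r + 1) Q i j"
    using assms(1) unfolding complete_consec_def by blast
  have Qp: "Q j permutes {..<N}" if "j < d" for j
    using Q that unfolding perm_tuples_def by auto
  define p where "p j r = (if r < N then colf d N j r else r)" for j r
  have pp: "p j permutes {..<N}" for j
  proof (rule inj_imp_permutes)
    show "inj_on (p j) {..<N}" using colf_inj[of d N j] unfolding p_def inj_on_def by auto
  qed (auto simp: p_def colf_range)
  define P where "P = restrict (\<lambda>j. inv (Q j \<circ> p j)) {..<d}"
  have qp: "Q j \<circ> p j permutes {..<N}" if "j < d" for j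
    using permutes_compose[OF pp Qp[OF that]] .
  have P: "P \<in> perm_tuples N d"
    unfolding P_def perm_tuples_def using permutes_inv[OF qp] by auto
  have entry: "perm_matrix A P i j = int (colf d N j i) + 1" if "i < N" "j < d" for i j
  proof -
    have "inv (P j) = Q j \<circ> p j" using that unfolding P_def
      using permutes_inv_inv[OF qp[OF that(2)]] by simp
    then have "perm_matrix A P i j = A (Q j (colf d N j i)) j"
      unfolding perm_matrix_def using that by (simp add: p_def)
    also have "\<dots> = int (inv (Q j) (Q j (colf d N j i))) + 1"
      using hQ permutes_in_image[OF Qp[OF that(2)]] colf_range[OF that(1)] that
      by (simp add: perm_matrix_def)
    also have "\<dots> = int (colf d N j i) + 1"
      by (simp add: permutes_inverses(2)[OF Qp[OF that(2)]])
    finally show ?thesis .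
  qed
  have "\<forall>i<N.
     int d * (int N + 1) \<le> 2 * row_sum d (perm_matrix A P) i + 1
   \<and> 2 * row_sum d (perm_matrix A P) i \<le> int d * (int N + 1) + 1"
  proof (intro allI impI)
    fix i assume i: "i < N"
    have "row_sum d (perm_matrix A P) i = (\<Sum>j<d. int (colf d N j i) + 1)"
      unfolding row_sum_def using entry i by (intro sum.cong) auto
    also have "\<dots> = int (\<Sum>j<d. colf d N j i) + int d" by (simp add: sum.distrib)
    finally have e: "row_sum d (perm_matrix A P) i = int (\<Sum>j<d. colf d N j i) + int d" .
    have e2: "int d * (int N + 1) = int d * (int N - 1) + 2 * int d" by (simp add: algebra_simps)
    show "int d * (int N + 1) \<le> 2 * row_sum d (perm_matrix A P) i + 1
   \<and> 2 * row_sum d (perm_matrix A P) i \<le> int d * (int N + 1) + 1"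
      unfolding e e2 using colf_sum[OF assms(2) i] by (smt (verit))
  qed
  then show ?thesis using P by blast
qed


theorem corollary1:
  fixes N d :: nat and A :: "nat \<Rightarrow> nat \<Rightarrow> int"
  assumes "d \<ge> 2" and "N \<ge> 1" and "complete_consec N d A"
  defines "kf \<equiv> nat \<lfloor>log (real d) (real N)\<rfloor>"
      and "kc \<equiv> nat \<lceil>log (real d) (real N)\<rceil>"
  shows "a_d d kf \<le> beta N d A \<and> beta N d A \<le> gamma N d A \<and> gamma N d A \<le> a_d d kc
     \<and> beta N d A - a_d d kf \<le> (\<Sum>i<d. int i * int d ^ (kc - 1))
     \<and> a_d d kc - gamma N d A \<le> (\<Sum>i<d. int i * int d ^ (kc - 1))"
proof -
  let ?T = "perm_tuples N d"
  let ?F = "\<lambda>P. Min ((\<lambda>i. row_sum d (perm_matrix A P) i) ` {..<N})"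
  let ?G = "\<lambda>P. Max ((\<lambda>i. row_sum d (perm_matrix A P) i) ` {..<N})"
  define D where "D = int d"
  define n where "n = int N"
  obtain P0 where P0: "P0 \<in> ?T" and hP0: "\<forall>i<N.
     int d * (int N + 1) \<le> 2 * row_sum d (perm_matrix A P0) i + 1
   \<and> 2 * row_sum d (perm_matrix A P0) i \<le> int d * (int N + 1) + 1"
    using construction[OF assms(3,1)] by blast
  have fin: "finite ?T" by (rule perm_tuples_finite)
  have neN: "{..<N} \<noteq> {}" using assms(2) by (auto simp: lessThan_empty_iff)
  have b_def: "beta N d A = Max (?F ` ?T)" unfolding beta_def ..
  have g_def: "gamma N d A = Min (?G ` ?T)" unfolding gamma_def ..
  have b1: "?F P0 \<le> beta N d A" unfolding b_def using fin P0 by (intro Max_ge) auto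
  have g1: "gamma N d A \<le> ?G P0" unfolding g_def using fin P0 by (intro Min_le) auto
  have "beta N d A \<in> ?F ` ?T" unfolding b_def using fin P0 by (intro Max_in) auto
  then obtain P1 where P1: "P1 \<in> ?T" "beta N d A = ?F P1" by auto
  have b2: "2 * beta N d A \<le> D * (n + 1)"
    using min_max_avg(1)[OF assms(3) P1(1) assms(2)] P1(2) unfolding D_def n_def by simp
  have "gamma N d A \<in> ?G ` ?T" unfolding g_def using fin P0 by (intro Min_in) auto
  then obtain P2 where P2: "P2 \<in> ?T" "gamma N d A = ?G P2" by auto
  have g2: "D * (n + 1) \<le> 2 * gamma N d A"
    using min_max_avg(2)[OF assms(3) P2(1) assms(2)] P2(2) unfolding D_def n_def by simp
  have "?F P0 \<in> (\<lambda>i. row_sum d (perm_matrix A P0) i) ` {..<N}"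
    using neN by (intro Min_in) auto
  then have f0: "D * (n + 1) \<le> 2 * ?F P0 + 1" using hP0 unfolding D_def n_def by auto
  have "?G P0 \<in> (\<lambda>i. row_sum d (perm_matrix A P0) i) ` {..<N}"
    using neN by (intro Max_in) auto
  then have g0: "2 * ?G P0 \<le> D * (n + 1) + 1" using hP0 unfolding D_def n_def by auto
  define L where "L = log (real d) (real N)"
  have d1: "real d > 1" using assms(1) by simp
  have N0: "real N > 0" using assms(2) by simp
  have L0: "L \<ge> 0" unfolding L_def using d1 assms(2) by simp
  have kf_le: "real kf \<le> L" unfolding kf_def L_def[symmetric] using L0 by simp
  have kc_ge: "L \<le> real kc" unfolding kc_def L_def[symmetric] by linarith
  have kfc: "kf \<le> kc" "kc \<le> kf + 1" unfolding kf_def kc_def L_def[symmetric] using L0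
    by linarith+
  have "real d powr real kf \<le> real N" using kf_le le_log_iff[OF d1 N0] unfolding L_def by simp
  then have "real (d ^ kf) \<le> real N" using d1 by (simp add: powr_realpow)
  then have X: "D ^ kf \<le> n" unfolding D_def n_def by (metis of_nat_le_iff of_nat_power)
  have "real N \<le> real d powr real kc" using kc_ge log_le_iff[OF d1 N0] unfolding L_def by simp
  then have "real N \<le> real (d ^ kc)" using d1 by (simp add: powr_realpow)
  then have Y: "n \<le> D ^ kc" unfolding D_def n_def by (metis of_nat_le_iff of_nat_power)
  have D2: "D \<ge> 2" unfolding D_def using assms(1) by simp
  have YX: "D ^ kc - D ^ kf \<le> (D - 1) * D ^ (kc - 1)"
  proof (cases kc)
    case 0 then show ?thesis using kfc D2 by simp
  next
    case (Suc k)
    then have "k \<le> kf" using kfc by simp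
    then have "D ^ k \<le> D ^ kf" using D2 by (simp add: power_increasing)
    then show ?thesis using Suc by (simp add: algebra_simps)
  qed
  have S: "2 * (\<Sum>i<d. int i * int d ^ (kc - 1)) = D * ((D - 1) * D ^ (kc - 1))"
  proof -
    have s1: "2 * (\<Sum>i<d. int i) = int d * (int d - 1)"
      by (induction d) (auto simp: algebra_simps)
    have e: "(\<Sum>i<d. int i * int d ^ (kc - 1)) = (\<Sum>i<d. int i) * int d ^ (kc - 1)"
      by (simp add: sum_distrib_right)
    have "2 * (\<Sum>i<d. int i * int d ^ (kc - 1)) = (2 * (\<Sum>i<d. int i)) * int d ^ (kc - 1)"
      unfolding e by (simp only: mult.assoc)
    also have "\<dots> = D * ((D - 1) * D ^ (kc - 1))" unfolding s1 D_def by (simp only: mult.assoc)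
    finally show ?thesis .
  qed
  have af: "2 * a_d d kf = D * (D ^ kf + 1)" unfolding D_def by (rule a_d_formula)
  have ac: "2 * a_d d kc = D * (D ^ kc + 1)" unfolding D_def by (rule a_d_formula)
  have m1: "D * (D ^ kf + 1) \<le> D * (n + 1)" using X D2 by (intro mult_left_mono) auto
  have m2: "D * (n + 1) \<le> D * (D ^ kc + 1)" using Y D2 by (intro mult_left_mono) auto
  have m3: "D * (n - D ^ kf) \<le> D * ((D - 1) * D ^ (kc - 1))"
    using YX Y D2 by (intro mult_left_mono) auto
  have m4: "D * (D ^ kc - n) \<le> D * ((D - 1) * D ^ (kc - 1))"
    using YX X D2 by (intro mult_left_mono) auto
  have m3': "D * (n + 1) - D * (D ^ kf + 1) = D * (n - D ^ kf)" by (simp add: algebra_simps)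
  have m4': "D * (D ^ kc + 1) - D * (n + 1) = D * (D ^ kc - n)" by (simp add: algebra_simps)
  show ?thesis using b1 g1 b2 g2 f0 g0 af ac m1 m2 m3 m4 m3' m4' S by linarith
qed

end
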